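(* Let $k\ge 2$ and $n\ge 1$ be integers, let $\bar{\mathcal{P}}=(\bar p_{i_1\dots i_k})\in\mathbb{R}^{[k,n]}$ be a columnwise-substochastic tensor, let $\mathbf{v}\in\mathbb{R}^n$ be a stochastic vector and let $\alpha\in[0,1)$. If the MLPPR system $(\mathbf{e}^T\mathbf{y})^{k-2}\mathbf{y}-\alpha\bar{\mathcal{P}}\mathbf{y}^{k-1}=\mathbf{v}$ has a nonnegative solution $\mathbf{y}_*\in\mathbb{R}^n_+$, then $\mathbf{y}_*$ belongs to the set $\Delta:=\{\mathbf{y}\in\mathbb{R}^n_+ : \mathbf{y}^T\mathbf{e}\le \varrho\}$, where $\varrho:=(1-\alpha)^{-\frac{1}{k-1}}$, and $\Delta$ is a bounded, closed and convex set.
   Context: $\mathbb{R}^{[k,n]}$ denotes the space of real tensors of order $k$ and dimension $n$ (indices $i_1,\dots,i_k\in\{1,\dots,n\}$). For $\mathcal{P}\in\mathbb{R}^{[k,n]}$ and $\mathbf{y}\in\mathbb{R}^n$, $\mathcal{P}\mathbf{y}^{k-1}\in\mathbb{R}^n$ is the vector with entries $(\mathcal{P}\mathbf{y}^{k-1})_i=\sum_{i_2,\dots,i_k=1}^n p_{i i_2\dots i_k}y_{i_2}\cdots y_{i_k}$. A tensor $\bar{\mathcal{P}}$ is columnwise-substochastic if all its entries are nonnegative and $\sum_{i=1}^n \bar p_{i i_2\dots i_k}\le 1$ for all $i_2,\dots,i_k$. $\mathbf{e}\in\mathbb{R}^n$ is the all-ones vector; a stochastic vector is a nonnegative vector whose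 entries sum to $1$. The MLPPR system is usually written $(I\circ\mathbf{e}^{\circ(k-2)}-\alpha\bar{\mathcal{P}})\mathbf{y}^{k-1}=\mathbf{v}$, where $I\circ\mathbf{e}^{\circ(k-2)}$ is the tensor with entries $\delta_{i_1i_2}$ (outer product of the identity matrix with $k-2$ copies of $\mathbf{e}$), so that $(I\circ\mathbf{e}^{\circ(k-2)})\mathbf{y}^{k-1}=(\mathbf{e}^T\mathbf{y})^{k-2}\mathbf{y}$. *)

theory Defs
  imports "HOL-Analysis.Analysis"
begin

text \<open>A tensor of order k and dimension n = CARD('n) is represented as a function
  P :: 'n => 'n list => real, where P i [i2,...,ik] is the entry p_{i i2 ... ik};
  only lists of length k-1 are relevant.\<close>

definition tindices :: "nat \<Rightarrow> 'n::finite list set" where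
  "tindices k = {js. length js = k - 1}"

definition tensor_apply :: "nat \<Rightarrow> ('n::finite \<Rightarrow> 'n list \<Rightarrow> real) \<Rightarrow> real^'n \<Rightarrow> real^'n" where
  "tensor_apply k P y = (\<chi> i. \<Sum>js\<in>tindices k. P i js * prod_list (map (\<lambda>j. y $ j) js))"

definition columnwise_substochastic :: "nat \<Rightarrow> ('n::finite \<Rightarrow> 'n list \<Rightarrow> real) \<Rightarrow> bool" where
  "columnwise_substochastic k P \<longleftrightarrow>
     (\<forall>i. \<forall>js\<in>tindices k. 0 \<le> P i js) \<and> (\<forall>js\<in>tindices k. (\<Sum>i\<in>UNIV. P i js) \<le> 1)"

definition stochastic_vec :: "real^'n::finite \<Rightarrow> bool" where
  "stochastic_vec v \<longleftrightarrow> (\<forall>i. 0 \<le> v $ i) \<and> (\<Sum>i\<in>UNIV. v $ i) = 1"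

definition nonneg_vec :: "real^'n::finite \<Rightarrow> bool" where
  "nonneg_vec y \<longleftrightarrow> (\<forall>i. 0 \<le> y $ i)"

definition rho :: "nat \<Rightarrow> real \<Rightarrow> real" where
  "rho k \<alpha> = (1 - \<alpha>) powr (- 1 / (real k - 1))"

definition Delta :: "nat \<Rightarrow> real \<Rightarrow> (real^'n::finite) set" where
  "Delta k \<alpha> = {y. nonneg_vec y \<and> (\<Sum>i\<in>UNIV. y $ i) \<le> rho k \<alpha>}"

end

theory Submission
  imports Defs
begin

lemma sum_lists_prod:
  fixes f :: "'n::finite \<Rightarrow> real"
  shows "(\<Sum>js\<in>{js::'n list. length js = m}. prod_list (map f js)) = (\<Sum>i\<in>UNIV. f i) ^ m"
proof (induction m)
  case 0
  then show ?case by simp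
next
  case (Suc m)
  have fin: "finite {js::'n list. length js = m}"
    using finite_lists_length_eq[of "UNIV::'n set" m] by simp
  have eq: "{js::'n list. length js = Suc m} = (\<lambda>(x,xs). x#xs) ` (UNIV \<times> {js. length js = m})"
    by (auto simp: length_Suc_conv image_iff)
  have inj: "inj_on (\<lambda>(x,xs). x#xs) (UNIV \<times> {js::'n list. length js = m})"
    by (auto simp: inj_on_def)
  have "(\<Sum>js\<in>{js::'n list. length js = Suc m}. prod_list (map f js))
      = (\<Sum>p\<in>UNIV \<times> {js::'n list. length js = m}. prod_list (map f ((\<lambda>(x,xs). x#xs) p)))"
    unfolding eq by (subst sum.reindex[OF inj]) (simp add: comp_def)
  also have "\<dots> = (\<Sum>x\<in>UNIV. \<Sum>xs\<in>{js::'n list. length js = m}. f x * prod_list (map f xs))"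
    unfolding sum.cartesian_product by (simp add: split_def)
  also have "\<dots> = (\<Sum>x\<in>UNIV. f x * (\<Sum>i\<in>UNIV. f i) ^ m)"
    by (simp add: sum_distrib_left[symmetric] Suc.IH)
  also have "\<dots> = (\<Sum>i\<in>UNIV. f i) ^ Suc m"
    by (simp add: sum_distrib_right[symmetric])
  finally show ?case .
qed

theorem lemma3p4:
  fixes k :: nat and P :: "'n::finite \<Rightarrow> 'n list \<Rightarrow> real"
    and v y :: "real^'n" and \<alpha> :: real
  assumes "k \<ge> 2"
    and "columnwise_substochastic k P"
    and "stochastic_vec v"
    and "0 \<le> \<alpha>" and "\<alpha> < 1"
    and "nonneg_vec y"
    and "\<forall>i. (\<Sum>j\<in>UNIV. y $ j) ^ (k - 2) * y $ i - \<alpha> * tensor_apply k P y $ i = v $ i"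
  shows "y \<in> Delta k \<alpha> \<and> bounded (Delta k \<alpha> :: (real^'n) set)
         \<and> closed (Delta k \<alpha> :: (real^'n) set) \<and> convex (Delta k \<alpha> :: (real^'n) set)"
proof -
  define s where "s = (\<Sum>j\<in>UNIV. y $ j)"
  have s0: "0 \<le> s" unfolding s_def using assms(6) by (simp add: nonneg_vec_def sum_nonneg)
  have fin: "finite (tindices k :: 'n list set)"
    using finite_lists_length_eq[of "UNIV::'n set" "k-1"] by (simp add: tindices_def)
  have pr0: "\<And>js. 0 \<le> prod_list (map (\<lambda>j. y $ j) js)"
    using assms(6) by (intro prod_list_nonneg) (auto simp: nonneg_vec_def)
  have T: "(\<Sum>i\<in>UNIV. tensor_apply k P y $ i) \<le> s ^ (k - 1)"
  proof -
    have "(\<Sum>i\<in>UNIV. tensor_apply k P y $ i)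
       = (\<Sum>js\<in>tindices k. (\<Sum>i\<in>UNIV. P i js) * prod_list (map (\<lambda>j. y $ j) js))"
      unfolding tensor_apply_def by (simp add: sum.swap[of _ UNIV] sum_distrib_right)
    also have "\<dots> \<le> (\<Sum>js\<in>tindices k. prod_list (map (\<lambda>j. y $ j) js))"
      proof (rule sum_mono)
      fix js :: "'n list" assume "js \<in> tindices k"
      hence "(\<Sum>i\<in>UNIV. P i js) \<le> 1" using assms(2) by (auto simp: columnwise_substochastic_def)
      from mult_right_mono[OF this pr0[of js]]
      show "(\<Sum>i\<in>UNIV. P i js) * prod_list (map (\<lambda>j. y $ j) js) \<le> prod_list (map (\<lambda>j. y $ j) js)" by simp
    qed
    also have "\<dots> = s ^ (k - 1)" unfolding tindices_def s_def by (rule sum_lists_prod)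
    finally show ?thesis .
  qed
  have "(\<Sum>i\<in>UNIV. s ^ (k - 2) * y $ i - \<alpha> * tensor_apply k P y $ i) = (\<Sum>i\<in>UNIV. v $ i)"
    using assms(7) s_def by simp
  hence "s ^ (k-2) * s - \<alpha> * (\<Sum>i\<in>UNIV. tensor_apply k P y $ i) = 1"
    using assms(3) by (simp add: stochastic_vec_def sum_subtractf sum_distrib_left s_def)
  moreover have "s ^ (k-2) * s = s ^ (k-1)"
    using assms(1) by (metis Suc_diff_Suc One_nat_def Suc_1 Suc_le_lessD diff_Suc_1 power_Suc2)
  ultimately have "s ^ (k-1) - \<alpha> * s^(k-1) \<le> 1"
    using T assms(4) by (smt (verit) mult_left_mono)
  hence A: "(1 - \<alpha>) * s ^ (k-1) \<le> 1" by (simp add: algebra_simps)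
  have km: "real k - 1 > 0" using assms(1) by simp
  have "s ^ (k-1) \<le> 1 / (1 - \<alpha>)" using A assms(5) by (simp add: field_simps)
  hence "s ^ (k-1) \<le> (1 - \<alpha>) powr (-1)" using assms(5) by (simp add: powr_minus divide_inverse)
  hence "(s ^ (k-1)) powr (1 / (real k - 1)) \<le> ((1 - \<alpha>) powr (-1)) powr (1 / (real k - 1))"
    using s0 km by (intro powr_mono2) auto
  moreover have "(s ^ (k-1)) powr (1 / (real k - 1)) = s"
  proof -
    have "(s ^ (k-1)) = s powr (real (k-1))" using s0
      by (cases "s = 0") (use assms(1) powr_realpow[of s "k-1"] in auto)
    thus ?thesis using s0 km assms(1) by (simp add: powr_powr of_nat_diff)
  qed
  moreover have "((1 - \<alpha>) powr (-1)) powr (1 / (real k - 1)) = rho k \<alpha>"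
    unfolding rho_def powr_powr by simp
  ultimately have sr: "s \<le> rho k \<alpha>" by simp
  have mem: "y \<in> Delta k \<alpha>" using sr assms(6) by (simp add: Delta_def s_def)
  have bnd: "bounded (Delta k \<alpha> :: (real^'n) set)"
  proof -
    have "\<forall>x\<in>(Delta k \<alpha> :: (real^'n) set). norm x \<le> rho k \<alpha>"
    proof
      fix x :: "real^'n" assume "x \<in> Delta k \<alpha>"
      hence "\<forall>i. 0 \<le> x $ i" "(\<Sum>i\<in>UNIV. x $ i) \<le> rho k \<alpha>" by (auto simp: Delta_def nonneg_vec_def)
      moreover have "norm x \<le> (\<Sum>i\<in>UNIV. \<bar>x $ i\<bar>)" by (rule norm_le_l1_cart)
      ultimately show "norm x \<le> rho k \<alpha>" by simp
    qed
    thus ?thesis unfolding bounded_iff by blast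
  qed
  have cl: "closed (Delta k \<alpha> :: (real^'n) set)"
  proof -
    have "Delta k \<alpha> = {x::real^'n. \<forall>i. 0 \<le> x $ i} \<inter> {x. (\<Sum>i\<in>UNIV. x $ i) \<le> rho k \<alpha>}"
      by (auto simp: Delta_def nonneg_vec_def)
    moreover have "closed {x::real^'n. \<forall>i. 0 \<le> x $ i}"
      by (intro closed_Collect_all closed_Collect_le continuous_intros)
    moreover have "closed {x::real^'n. (\<Sum>i\<in>UNIV. x $ i) \<le> rho k \<alpha>}"
      by (intro closed_Collect_le continuous_intros)
    ultimately show ?thesis by auto
  qed
  have cv: "convex (Delta k \<alpha> :: (real^'n) set)"
    unfolding convex_def
  proof (intro ballI allI impI)
    fix x z :: "real^'n" and u w :: real
    assume x: "x \<in> Delta k \<alpha>" and z: "z \<in> Delta k \<alpha>" and u: "0 \<le> u" and w: "0 \<le> w" and uw: "u + w = 1"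
    have xn: "\<forall>i. 0 \<le> x $ i" and xs: "(\<Sum>i\<in>UNIV. x $ i) \<le> rho k \<alpha>" using x by (auto simp: Delta_def nonneg_vec_def)
    have zn: "\<forall>i. 0 \<le> z $ i" and zs: "(\<Sum>i\<in>UNIV. z $ i) \<le> rho k \<alpha>" using z by (auto simp: Delta_def nonneg_vec_def)
    have "(\<Sum>i\<in>UNIV. (u *\<^sub>R x + w *\<^sub>R z) $ i) = u * (\<Sum>i\<in>UNIV. x $ i) + w * (\<Sum>i\<in>UNIV. z $ i)"
      by (simp add: sum.distrib sum_distrib_left)
    also have "\<dots> \<le> u * rho k \<alpha> + w * rho k \<alpha>"
      using u w xs zs by (intro add_mono mult_left_mono) auto
    also have "\<dots> = rho k \<alpha>" using uw by (simp add: distrib_right[symmetric])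
    finally show "u *\<^sub>R x + w *\<^sub>R z \<in> Delta k \<alpha>"
      using xn zn u w by (auto simp: Delta_def nonneg_vec_def)
  qed
  show ?thesis using mem bnd cl cv by blast
qed

end
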